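(* Let $G$ be a transient network and let $A$ be a set of vertices for which there exist $\varepsilon>0$ and infinitely many pairwise disjoint sets $A_1,A_2,\ldots\subseteq A$ with $\operatorname{Cap}(A_i)\ge\varepsilon$ for every $i\ge1$. Then $\operatorname{Cap}(A)=\infty$.
   Context: A network is a connected locally finite graph $G=(V,E)$ with conductances $c:E\to(0,\infty)$; its random walk moves along an incident edge chosen with probability proportional to conductance, and $G$ is transient if this walk is transient. With $c(v)=\sum_{e^-=v}c(e)$ and $\tau_A^+$ the first return time to $A$, the capacity of a finite set $A$ is $\operatorname{Cap}(A)=\sum_{v\in A}c(v)\mathbf P_v(\tau_A^+=\infty)$, and for infinite $A$ it is $\sup\{\operatorname{Cap}(A'):A'\subseteq A\text{ finite}\}$. *)

theory Defs
  imports "HOL-Analysis.Analysis"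
begin

text \<open>A network on vertex set V is given by a symmetric conductance function
  c :: 'v => 'v => real; the edges are the pairs {x,y} with c x y > 0.\<close>

definition nbrs :: "('v \<Rightarrow> 'v \<Rightarrow> real) \<Rightarrow> 'v \<Rightarrow> 'v set" where
  "nbrs c x = {y. c x y > 0}"

definition network :: "'v set \<Rightarrow> ('v \<Rightarrow> 'v \<Rightarrow> real) \<Rightarrow> bool" where
  "network V c \<longleftrightarrow>
     V \<noteq> {} \<and>
     (\<forall>x y. c x y = c y x) \<and>
     (\<forall>x y. c x y \<ge> 0) \<and>
     (\<forall>x y. c x y > 0 \<longrightarrow> x \<in> V \<and> y \<in> V) \<and>
     (\<forall>x\<in>V. finite (nbrs c x)) \<and>
     (\<forall>x\<in>V. \<forall>y\<in>V. (x, y) \<in> {(a, b). c a b > 0}\<^sup>*)"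

definition cond :: "('v \<Rightarrow> 'v \<Rightarrow> real) \<Rightarrow> 'v \<Rightarrow> real" where
  "cond c x = (\<Sum>y\<in>nbrs c x. c x y)"

definition trans_prob :: "('v \<Rightarrow> 'v \<Rightarrow> real) \<Rightarrow> 'v \<Rightarrow> 'v \<Rightarrow> real" where
  "trans_prob c x y = c x y / cond c x"

text \<open>no_return c A n x = P_x(the walk does not visit A at any of the times 1..n),
  i.e. P_x(tau_A^+ > n), computed from the one-step transition probabilities.\<close>
primrec no_return :: "('v \<Rightarrow> 'v \<Rightarrow> real) \<Rightarrow> 'v set \<Rightarrow> nat \<Rightarrow> 'v \<Rightarrow> real" where
  "no_return c A 0 x = 1"
| "no_return c A (Suc n) x =
     (\<Sum>y\<in>nbrs c x. trans_prob c x y * (if y \<in> A then 0 else no_return c A n y))"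

text \<open>P_x(tau_A^+ = infinity) = lim_n P_x(tau_A^+ > n) (a decreasing limit).\<close>
definition escape_prob :: "('v \<Rightarrow> 'v \<Rightarrow> real) \<Rightarrow> 'v set \<Rightarrow> 'v \<Rightarrow> real" where
  "escape_prob c A x = (INF n. no_return c A n x)"

definition transient :: "'v set \<Rightarrow> ('v \<Rightarrow> 'v \<Rightarrow> real) \<Rightarrow> bool" where
  "transient V c \<longleftrightarrow> (\<forall>v\<in>V. escape_prob c {v} v > 0)"

definition cap_fin :: "('v \<Rightarrow> 'v \<Rightarrow> real) \<Rightarrow> 'v set \<Rightarrow> real" where
  "cap_fin c A = (\<Sum>v\<in>A. cond c v * escape_prob c A v)"

definition Cap :: "('v \<Rightarrow> 'v \<Rightarrow> real) \<Rightarrow> 'v set \<Rightarrow> ereal" where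
  "Cap c A = (if finite A then ereal (cap_fin c A)
              else (SUP A'\<in>{A'. A' \<subseteq> A \<and> finite A'}. ereal (cap_fin c A')))"

end

theory Submission
  imports Defs
begin


definition Qf :: "('v \<Rightarrow> 'v \<Rightarrow> real) \<Rightarrow> 'v set \<Rightarrow> ('v \<Rightarrow> real) \<Rightarrow> ('v \<Rightarrow> real) \<Rightarrow> real" where
  "Qf c S f g = (\<Sum>x\<in>S. \<Sum>y\<in>S. c x y * (f x - f y) * (g x - g y))"

lemma Qf_sym: "Qf c S f g = Qf c S g f"
  unfolding Qf_def by (intro sum.cong refl) (simp add: mult_ac)

lemma Qf_nonneg: assumes "\<And>x y. c x y \<ge> 0" shows "Qf c S f f \<ge> 0"
  unfolding Qf_def by (intro sum_nonneg) (simp add: assms mult.assoc)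

lemma Qf_quad:
  "Qf c S (\<lambda>x. f x - t * g x) (\<lambda>x. f x - t * g x) = Qf c S f f - 2 * t * Qf c S f g + t^2 * Qf c S g g"
proof -
  have "Qf c S (\<lambda>x. f x - t * g x) (\<lambda>x. f x - t * g x) =
    (\<Sum>x\<in>S. \<Sum>y\<in>S. c x y * (f x - f y) * (f x - f y) - 2 * t * (c x y * (f x - f y) * (g x - g y))
       + t^2 * (c x y * (g x - g y) * (g x - g y)))"
    unfolding Qf_def by (intro sum.cong refl) (simp add: algebra_simps power2_eq_square)
  also have "\<dots> = Qf c S f f - 2 * t * Qf c S f g + t^2 * Qf c S g g"
    unfolding Qf_def by (simp add: sum.distrib sum_subtractf sum_distrib_left)
  finally show ?thesis .
qed

lemma Qf_CS: assumes "\<And>x y. c x y \<ge> 0"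
  shows "(Qf c S f g)^2 \<le> Qf c S f f * Qf c S g g"
proof -
  have P: "\<And>t. 0 \<le> Qf c S f f - 2 * t * Qf c S f g + t^2 * Qf c S g g"
  proof -
    fix t
    show "0 \<le> Qf c S f f - 2 * t * Qf c S f g + t^2 * Qf c S g g"
    proof -
      have "0 \<le> Qf c S (\<lambda>x. f x - t * g x) (\<lambda>x. f x - t * g x)" by (rule Qf_nonneg) (rule assms)
      thus ?thesis using Qf_quad[of c S f t g] by simp
    qed
  qed
  have gg: "Qf c S g g \<ge> 0" by (rule Qf_nonneg) (rule assms)
  show ?thesis
  proof (cases "Qf c S g g = 0")
    case True
    show ?thesis
    proof (cases "Qf c S f g = 0")
      case False
      have "0 \<le> Qf c S f f - 2 * ((Qf c S f f + 1) / (2 * Qf c S f g)) * Qf c S f g"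
        using P[of "(Qf c S f f + 1) / (2 * Qf c S f g)"] True by simp
      also have "\<dots> = -1" using False by (simp add: field_simps)
      finally show ?thesis by simp
    qed (simp add: True)
  next
    case False
    hence pos: "Qf c S g g > 0" using gg by simp
    have "0 \<le> Qf c S f f - 2 * (Qf c S f g / Qf c S g g) * Qf c S f g + (Qf c S f g / Qf c S g g)^2 * Qf c S g g"
      by (rule P)
    also have "\<dots> = Qf c S f f - (Qf c S f g)^2 / Qf c S g g"
      using pos by (simp add: field_simps power2_eq_square)
    finally have "(Qf c S f g)^2 / Qf c S g g \<le> Qf c S f f" by simp
    thus ?thesis using pos by (simp add: divide_le_eq mult.commute)
  qed
qed

lemma Qf_diff_left: "Qf c S (\<lambda>x. f x - g x) h = Qf c S f h - Qf c S g h"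
  unfolding Qf_def by (simp add: sum_subtractf[symmetric] algebra_simps)

lemma Qf_add_left: "Qf c S (\<lambda>x. f x + g x) h = Qf c S f h + Qf c S g h"
  unfolding Qf_def by (simp add: sum.distrib[symmetric] algebra_simps)

lemma Qf_green:
  assumes sym: "\<And>x y. c x y = c y x"
  shows "Qf c S f g = 2 * (\<Sum>x\<in>S. f x * (\<Sum>y\<in>S. c x y * (g x - g y)))"
proof -
  have "Qf c S f g = (\<Sum>x\<in>S. \<Sum>y\<in>S. c x y * f x * (g x - g y)) - (\<Sum>x\<in>S. \<Sum>y\<in>S. c x y * f y * (g x - g y))"
    unfolding Qf_def by (simp add: sum_subtractf[symmetric] algebra_simps)
  also have "(\<Sum>x\<in>S. \<Sum>y\<in>S. c x y * f y * (g x - g y)) = (\<Sum>y\<in>S. \<Sum>x\<in>S. c x y * f y * (g x - g y))"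
    by (rule sum.swap)
  also have "\<dots> = (\<Sum>x\<in>S. \<Sum>y\<in>S. - (c x y * f x * (g x - g y)))"
    by (intro sum.cong refl) (simp add: sym algebra_simps)
  also have "\<dots> = - (\<Sum>x\<in>S. \<Sum>y\<in>S. c x y * f x * (g x - g y))"
    by (simp add: sum_negf)
  finally show ?thesis by (simp add: sum_distrib_left mult_ac)
qed



primrec hit :: "('v \<Rightarrow> 'v \<Rightarrow> real) \<Rightarrow> 'v set \<Rightarrow> 'v set \<Rightarrow> nat \<Rightarrow> 'v \<Rightarrow> real" where
  "hit c W K 0 x = (if x \<in> K then 1 else 0)"
| "hit c W K (Suc n) x = (if x \<in> K then 1 else if x \<notin> W then 0
     else (\<Sum>y\<in>nbrs c x. trans_prob c x y * hit c W K n y))"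

definition hlim :: "('v \<Rightarrow> 'v \<Rightarrow> real) \<Rightarrow> 'v set \<Rightarrow> 'v set \<Rightarrow> 'v \<Rightarrow> real" where
  "hlim c W K x = (SUP n. hit c W K n x)"

locale net =
  fixes V :: "'v set" and c :: "'v \<Rightarrow> 'v \<Rightarrow> real"
  assumes nw: "network V c" and tr: "transient V c"
begin

lemma c_nonneg: "c x y \<ge> 0" using nw unfolding network_def by blast
lemma c_sym: "c x y = c y x" using nw unfolding network_def by blast
lemma c_posV: "c x y > 0 \<Longrightarrow> x \<in> V \<and> y \<in> V" using nw unfolding network_def by blast

lemma nbrs_V: "y \<in> nbrs c x \<Longrightarrow> x \<in> V \<and> y \<in> V"
  using c_posV unfolding nbrs_def by auto

lemma nbrs_finite: "finite (nbrs c x)"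
proof (cases "x \<in> V")
  case True thus ?thesis using nw unfolding network_def by blast
next
  case False
  hence "nbrs c x = {}" using nbrs_V by blast
  thus ?thesis by simp
qed

lemma not_nbr: "y \<notin> nbrs c x \<Longrightarrow> c x y = 0"
  using c_nonneg[of x y] unfolding nbrs_def by force

lemma cond_nonneg: "cond c x \<ge> 0"
  unfolding cond_def by (intro sum_nonneg) (simp add: c_nonneg)

lemma tp_nonneg: "trans_prob c x y \<ge> 0"
  unfolding trans_prob_def by (simp add: c_nonneg cond_nonneg)

lemma nr_nonneg: "no_return c A n x \<ge> 0"
  by (induction n arbitrary: x) (auto intro!: sum_nonneg mult_nonneg_nonneg simp: tp_nonneg)

lemma nr_bdd: "bdd_below (range (\<lambda>n. no_return c A n x))"
  by (rule bdd_belowI[of _ 0]) (auto simp: nr_nonneg)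

lemma esc_le1: "escape_prob c A x \<le> 1"
proof -
  have "escape_prob c A x \<le> no_return c A 0 x"
    unfolding escape_prob_def by (rule cINF_lower[OF nr_bdd]) simp
  thus ?thesis by simp
qed

lemma esc_nonneg: "escape_prob c A x \<ge> 0"
  unfolding escape_prob_def by (rule cINF_greatest) (auto simp: nr_nonneg)

lemma nbrs_ne: assumes "x \<in> V" shows "nbrs c x \<noteq> {}"
proof
  assume e: "nbrs c x = {}"
  have "escape_prob c {x} x \<le> no_return c {x} (Suc 0) x"
    unfolding escape_prob_def by (rule cINF_lower[OF nr_bdd]) simp
  also have "\<dots> = 0" using e by simp
  finally show False using tr assms unfolding transient_def by force
qed

lemma cond_pos: assumes "x \<in> V" shows "cond c x > 0"
proof -
  obtain y where "y \<in> nbrs c x" using nbrs_ne[OF assms] by blast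
  hence "c x y > 0" unfolding nbrs_def by simp
  moreover have "c x y \<le> cond c x" unfolding cond_def
    using \<open>y \<in> nbrs c x\<close> by (intro member_le_sum) (auto simp: nbrs_finite c_nonneg)
  ultimately show ?thesis by simp
qed

lemma sumP: assumes "x \<in> V" shows "(\<Sum>y\<in>nbrs c x. trans_prob c x y) = 1"
  using cond_pos[OF assms] unfolding trans_prob_def cond_def
  by (simp add: sum_divide_distrib[symmetric])

lemma cP: assumes "x \<in> V" shows "cond c x * trans_prob c x y = c x y"
  using cond_pos[OF assms] unfolding trans_prob_def by simp

lemma hit_K: "x \<in> K \<Longrightarrow> hit c W K n x = 1" by (cases n) auto

lemma hit_bounds: assumes "W \<subseteq> V" shows "0 \<le> hit c W K n x \<and> hit c W K n x \<le> 1"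
proof (induction n arbitrary: x)
  case 0 thus ?case by simp
next
  case (Suc n)
  show ?case
  proof (cases "x \<in> K \<or> x \<notin> W")
    case False
    hence xV: "x \<in> V" using assms by auto
    have "(\<Sum>y\<in>nbrs c x. trans_prob c x y * hit c W K n y) \<le> (\<Sum>y\<in>nbrs c x. trans_prob c x y)"
      by (intro sum_mono) (simp add: Suc tp_nonneg mult_left_le)
    moreover have "0 \<le> (\<Sum>y\<in>nbrs c x. trans_prob c x y * hit c W K n y)"
      by (intro sum_nonneg) (simp add: Suc tp_nonneg)
    ultimately show ?thesis using False sumP[OF xV] by auto
  qed auto
qed

lemma hit_nonneg: "hit c W K n x \<ge> 0"
  by (induction n arbitrary: x) (auto intro!: sum_nonneg mult_nonneg_nonneg simp: tp_nonneg)

lemma hit_mono_n: shows "hit c W K n x \<le> hit c W K (Suc n) x"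
proof (induction n arbitrary: x)
  case 0 
  have "hit c W K 0 x \<le> hit c W K (Suc 0) x" if "x \<notin> K"
    using that hit_nonneg[of W K "Suc 0" x] by simp
  thus ?case by (cases "x \<in> K") auto
next
  case (Suc n)
  have "(\<Sum>y\<in>nbrs c x. trans_prob c x y * hit c W K n y) \<le> (\<Sum>y\<in>nbrs c x. trans_prob c x y * hit c W K (Suc n) y)"
    by (intro sum_mono mult_left_mono Suc tp_nonneg)
  thus ?case by (simp only: hit.simps) simp
qed

lemma hit_incseq: shows "incseq (\<lambda>n. hit c W K n x)"
  by (rule incseq_SucI) (rule hit_mono_n)

lemma hit_mono_W: assumes "W \<subseteq> W'" shows "hit c W K n x \<le> hit c W' K n x"
proof (induction n arbitrary: x)
  case 0 thus ?case by simp
next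
  case (Suc n)
  have s: "(\<Sum>y\<in>nbrs c x. trans_prob c x y * hit c W K n y) \<le> (\<Sum>y\<in>nbrs c x. trans_prob c x y * hit c W' K n y)"
    by (intro sum_mono mult_left_mono Suc tp_nonneg)
  show ?case
  proof (cases "x \<in> K")
    case True thus ?thesis by simp
  next
    case False
    show ?thesis
    proof (cases "x \<in> W")
      case True
      hence "x \<in> W'" using assms by auto
      thus ?thesis using s True False by simp
    next
      case f2: False
      thus ?thesis using False hit_nonneg[of W' K "Suc n" x] by simp
    qed
  qed
qed

end


definition capW :: "('v \<Rightarrow> 'v \<Rightarrow> real) \<Rightarrow> 'v set \<Rightarrow> 'v set \<Rightarrow> real" where
  "capW c W K = (\<Sum>v\<in>K. \<Sum>y\<in>nbrs c v. c v y * (1 - hlim c W K y))"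

context net begin

lemma hit_bdd: "W \<subseteq> V \<Longrightarrow> bdd_above (range (\<lambda>n. hit c W K n x))"
  by (rule bdd_aboveI[of _ 1]) (use hit_bounds in auto)

lemma hit_lim: "W \<subseteq> V \<Longrightarrow> (\<lambda>n. hit c W K n x) \<longlonglongrightarrow> hlim c W K x"
  unfolding hlim_def by (rule LIMSEQ_incseq_SUP[OF hit_bdd hit_incseq])

lemma hit_le_hlim: "W \<subseteq> V \<Longrightarrow> hit c W K n x \<le> hlim c W K x"
  unfolding hlim_def by (rule cSUP_upper[OF _ hit_bdd]) auto

lemma hlim_bounds: assumes "W \<subseteq> V" shows "0 \<le> hlim c W K x \<and> hlim c W K x \<le> 1"
proof
  show "0 \<le> hlim c W K x" using hit_le_hlim[OF assms, of K 0 x] hit_nonneg[of W K 0 x] by linarith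
  show "hlim c W K x \<le> 1" unfolding hlim_def by (rule cSUP_least) (use hit_bounds[OF assms] in auto)
qed

lemma hlim_K: "x \<in> K \<Longrightarrow> hlim c W K x = 1"
  unfolding hlim_def by (simp add: hit_K)

lemma hlim_out: assumes "x \<notin> W" "x \<notin> K" shows "hlim c W K x = 0"
proof -
  have "hit c W K n x = 0" for n using assms by (cases n) auto
  thus ?thesis unfolding hlim_def by simp
qed

lemma hlim_harm: assumes "W \<subseteq> V" "x \<in> W" "x \<notin> K"
  shows "hlim c W K x = (\<Sum>y\<in>nbrs c x. trans_prob c x y * hlim c W K y)"
proof -
  have "(\<lambda>n. hit c W K (Suc n) x) \<longlonglongrightarrow> hlim c W K x"
    using hit_lim[OF assms(1)] by (rule LIMSEQ_Suc)
  moreover have "(\<lambda>n. hit c W K (Suc n) x) = (\<lambda>n. \<Sum>y\<in>nbrs c x. trans_prob c x y * hit c W K n y)"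
    using assms by auto
  moreover have "(\<lambda>n. \<Sum>y\<in>nbrs c x. trans_prob c x y * hit c W K n y) \<longlonglongrightarrow> (\<Sum>y\<in>nbrs c x. trans_prob c x y * hlim c W K y)"
    by (intro tendsto_sum tendsto_mult tendsto_const hit_lim[OF assms(1)])
  ultimately show ?thesis using LIMSEQ_unique by metis
qed

lemma hlim_mono_W: assumes "W \<subseteq> W'" "W' \<subseteq> V" shows "hlim c W K x \<le> hlim c W' K x"
  by (rule LIMSEQ_le[OF hit_lim hit_lim]) (use assms hit_mono_W in auto)

lemma hlim_lap: assumes "W \<subseteq> V" "x \<in> W" "x \<notin> K"
  shows "(\<Sum>y\<in>nbrs c x. c x y * (hlim c W K x - hlim c W K y)) = 0"
proof -
  have xV: "x \<in> V" using assms by auto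
  have "(\<Sum>y\<in>nbrs c x. c x y * (hlim c W K x - hlim c W K y))
      = cond c x * hlim c W K x - cond c x * (\<Sum>y\<in>nbrs c x. trans_prob c x y * hlim c W K y)"
  proof -
    have 1: "(\<Sum>y\<in>nbrs c x. c x y * (hlim c W K x - hlim c W K y)) = cond c x * hlim c W K x - (\<Sum>y\<in>nbrs c x. c x y * hlim c W K y)"
      unfolding cond_def right_diff_distrib sum_subtractf sum_distrib_right[symmetric] by simp
    have 2: "(\<Sum>y\<in>nbrs c x. c x y * hlim c W K y) = cond c x * (\<Sum>y\<in>nbrs c x. trans_prob c x y * hlim c W K y)"
      unfolding sum_distrib_left by (intro sum.cong refl) (simp add: mult.assoc[symmetric] cP[OF xV])
    show ?thesis using 1 2 by simp
  qed
  also have "\<dots> = 0" using hlim_harm[OF assms] by simp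
  finally show ?thesis .
qed

lemma nr_hit: assumes "y \<in> V" "y \<notin> K" shows "no_return c K n y = 1 - hit c V K n y"
  using assms
proof (induction n arbitrary: y)
  case 0 thus ?case by simp
next
  case (Suc n)
  have "no_return c K (Suc n) y = (\<Sum>z\<in>nbrs c y. trans_prob c y z * (1 - hit c V K n z))"
    by (auto intro!: sum.cong simp: hit_K Suc.IH dest: nbrs_V)
  also have "\<dots> = 1 - (\<Sum>z\<in>nbrs c y. trans_prob c y z * hit c V K n z)"
    using sumP[OF Suc.prems(1)] by (simp add: algebra_simps sum_subtractf)
  finally show ?case using Suc.prems by simp
qed

lemma nr_Suc: assumes "v \<in> V"
  shows "no_return c K (Suc n) v = 1 - (\<Sum>z\<in>nbrs c v. trans_prob c v z * hit c V K n z)"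
proof -
  have "no_return c K (Suc n) v = (\<Sum>z\<in>nbrs c v. trans_prob c v z * (1 - hit c V K n z))"
    by (auto intro!: sum.cong simp: hit_K nr_hit dest: nbrs_V)
  also have "\<dots> = 1 - (\<Sum>z\<in>nbrs c v. trans_prob c v z * hit c V K n z)"
    using sumP[OF assms] by (simp add: algebra_simps sum_subtractf)
  finally show ?thesis .
qed

lemma esc_eq: assumes "v \<in> V"
  shows "escape_prob c K v = 1 - (\<Sum>y\<in>nbrs c v. trans_prob c v y * hlim c V K y)"
proof -
  let ?X = "\<lambda>n. no_return c K n v"
  let ?L = "1 - (\<Sum>y\<in>nbrs c v. trans_prob c v y * hlim c V K y)"
  have "(\<lambda>n. ?X (Suc n)) \<longlonglongrightarrow> ?L"
    unfolding nr_Suc[OF assms]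
    by (intro tendsto_diff tendsto_sum tendsto_mult tendsto_const hit_lim) auto
  hence L: "?X \<longlonglongrightarrow> ?L" by (rule LIMSEQ_imp_Suc)
  have "decseq ?X"
  proof (rule decseq_SucI)
    fix n
    show "?X (Suc n) \<le> ?X n"
    proof (cases n)
      case 0
      have "0 \<le> (\<Sum>z\<in>nbrs c v. trans_prob c v z * hit c V K 0 z)"
        by (intro sum_nonneg mult_nonneg_nonneg tp_nonneg hit_nonneg)
      thus ?thesis using 0 nr_Suc[OF assms, of K 0] by simp
    next
      case (Suc m)
      have "(\<Sum>z\<in>nbrs c v. trans_prob c v z * hit c V K m z) \<le> (\<Sum>z\<in>nbrs c v. trans_prob c v z * hit c V K (Suc m) z)"
        by (intro sum_mono mult_left_mono hit_mono_n tp_nonneg)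
      thus ?thesis using Suc nr_Suc[OF assms, of K] by simp
    qed
  qed
  hence "?X \<longlonglongrightarrow> (INF n. ?X n)" by (rule LIMSEQ_decseq_INF[OF nr_bdd])
  thus ?thesis unfolding escape_prob_def using L LIMSEQ_unique by blast
qed

lemma cap_fin_eq: assumes "K \<subseteq> V" shows "cap_fin c K = capW c V K"
  unfolding cap_fin_def capW_def
proof (intro sum.cong refl)
  fix v assume "v \<in> K"
  hence vV: "v \<in> V" using assms by auto
  have "cond c v * escape_prob c K v = cond c v - (\<Sum>y\<in>nbrs c v. cond c v * trans_prob c v y * hlim c V K y)"
    unfolding esc_eq[OF vV] by (simp add: algebra_simps sum_distrib_left)
  also have "\<dots> = (\<Sum>y\<in>nbrs c v. c v y * (1 - hlim c V K y))"
  proof -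
    have "(\<Sum>y\<in>nbrs c v. cond c v * trans_prob c v y * hlim c V K y) = (\<Sum>y\<in>nbrs c v. c v y * hlim c V K y)"
      by (intro sum.cong refl) (simp add: cP[OF vV])
    thus ?thesis by (simp add: cond_def algebra_simps sum_subtractf)
  qed
  finally show "cond c v * escape_prob c K v = (\<Sum>y\<in>nbrs c v. c v y * (1 - hlim c V K y))" .
qed

lemma capW_mono: assumes "W \<subseteq> W'" "W' \<subseteq> V" shows "capW c W' K \<le> capW c W K"
  unfolding capW_def
  by (intro sum_mono mult_left_mono) (auto simp: c_nonneg hlim_mono_W[OF assms])

end


primrec reach :: "('v \<Rightarrow> 'v \<Rightarrow> real) \<Rightarrow> nat \<Rightarrow> 'v \<Rightarrow> 'v set" where
  "reach c 0 x = {x}"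
| "reach c (Suc n) x = insert x (\<Union>y\<in>nbrs c x. reach c n y)"

context net begin

lemma reach_finite: "finite (reach c n x)"
  by (induction n arbitrary: x) (auto simp: nbrs_finite)

lemma hit_local: assumes "W \<subseteq> V" "reach c n x \<inter> V \<subseteq> W"
  shows "hit c W K n x = hit c V K n x"
  using assms(2)
proof (induction n arbitrary: x)
  case 0 thus ?case by simp
next
  case (Suc n)
  show ?case
  proof (cases "x \<in> K")
    case False
    show ?thesis
    proof (cases "x \<in> V")
      case True
      hence xW: "x \<in> W" using Suc.prems by auto
      have "(\<Sum>y\<in>nbrs c x. trans_prob c x y * hit c W K n y) = (\<Sum>y\<in>nbrs c x. trans_prob c x y * hit c V K n y)"
        by (intro sum.cong refl arg_cong2[where f="(*)"] Suc.IH) (use Suc.prems in auto)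
      thus ?thesis using xW True False by simp
    next
      case f2: False
      hence "x \<notin> W" using assms by auto
      thus ?thesis using f2 False by simp
    qed
  qed simp
qed

lemma approx:
  assumes "K \<subseteq> V" "finite K" "\<eta> > 0"
  shows "\<exists>W0. finite W0 \<and> W0 \<subseteq> V \<and> K \<subseteq> W0 \<and>
    (\<forall>W. W0 \<subseteq> W \<longrightarrow> W \<subseteq> V \<longrightarrow> capW c W K \<le> cap_fin c K + \<eta>)"
proof -
  define Y where "Y = (\<Union>v\<in>K. nbrs c v)"
  have fY: "finite Y" unfolding Y_def using assms(2) by (auto simp: nbrs_finite)
  define S where "S = (\<Sum>v\<in>K. cond c v)"
  have S0: "S \<ge> 0" unfolding S_def by (intro sum_nonneg cond_nonneg)
  define \<delta> where "\<delta> = \<eta> / (S + 1)"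
  have d0: "\<delta> > 0" unfolding \<delta>_def using S0 assms(3) by simp
  have "\<forall>y\<in>Y. eventually (\<lambda>n. hlim c V K y - \<delta> < hit c V K n y) sequentially"
    using d0 by (intro ballI order_tendstoD(1)[OF hit_lim]) auto
  hence "eventually (\<lambda>n. \<forall>y\<in>Y. hlim c V K y - \<delta> < hit c V K n y) sequentially"
    using fY by (simp add: eventually_ball_finite)
  then obtain n where n: "\<And>y. y \<in> Y \<Longrightarrow> hlim c V K y - \<delta> < hit c V K n y"
    unfolding eventually_sequentially by blast
  define W0 where "W0 = ((\<Union>y\<in>Y. reach c n y) \<inter> V) \<union> K"
  have "finite W0" unfolding W0_def using fY assms(2) by (auto simp: reach_finite)
  moreover have "W0 \<subseteq> V" unfolding W0_def using assms(1) by auto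
  moreover have "K \<subseteq> W0" unfolding W0_def by auto
  moreover have "capW c W K \<le> cap_fin c K + \<eta>" if W: "W0 \<subseteq> W" "W \<subseteq> V" for W
  proof -
    have close: "hlim c V K y - hlim c W K y \<le> \<delta>" if "y \<in> Y" for y
    proof -
      have "reach c n y \<inter> V \<subseteq> W" using W that unfolding W0_def by auto
      hence "hit c W K n y = hit c V K n y" by (rule hit_local[OF W(2)])
      moreover have "hit c W K n y \<le> hlim c W K y" by (rule hit_le_hlim[OF W(2)])
      ultimately show ?thesis using n[OF that] by linarith
    qed
    have "capW c W K - capW c V K = (\<Sum>v\<in>K. \<Sum>y\<in>nbrs c v. c v y * (hlim c V K y - hlim c W K y))"
      unfolding capW_def by (simp add: sum_subtractf[symmetric] algebra_simps)
    also have "\<dots> \<le> (\<Sum>v\<in>K. \<Sum>y\<in>nbrs c v. c v y * \<delta>)"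
      by (intro sum_mono mult_left_mono close) (auto simp: Y_def c_nonneg)
    also have "\<dots> = \<delta> * S" unfolding S_def cond_def by (simp add: sum_distrib_left sum_distrib_right mult.commute)
    also have "\<dots> \<le> \<eta>"
    proof -
      have "\<delta> * S = \<eta> * (S / (S + 1))" unfolding \<delta>_def by simp
      also have "\<dots> \<le> \<eta> * 1" using S0 assms(3) by (intro mult_left_mono) auto
      finally show ?thesis by simp
    qed
    finally show ?thesis using cap_fin_eq[OF assms(1)] by simp
  qed
  ultimately show ?thesis by blast
qed

end


definition mu :: "('v \<Rightarrow> 'v \<Rightarrow> real) \<Rightarrow> 'v set \<Rightarrow> 'v set \<Rightarrow> 'v \<Rightarrow> real" where
  "mu c W K x = (\<Sum>y\<in>nbrs c x. c x y * (1 - hlim c W K y))"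

context net begin

lemma capW_mu: "capW c W K = (\<Sum>x\<in>K. mu c W K x)"
  unfolding capW_def mu_def ..

lemma mu_nonneg: "W \<subseteq> V \<Longrightarrow> mu c W K x \<ge> 0"
  unfolding mu_def by (intro sum_nonneg mult_nonneg_nonneg) (use c_nonneg hlim_bounds in auto)

lemma cap_fin_nonneg: "cap_fin c K \<ge> 0"
  unfolding cap_fin_def by (intro sum_nonneg mult_nonneg_nonneg cond_nonneg esc_nonneg)

lemma green_h:
  assumes WV: "W \<subseteq> V" and fS: "finite S" and WS: "W \<subseteq> S" and NS: "\<And>x. x \<in> W \<Longrightarrow> nbrs c x \<subseteq> S"
    and KW: "K \<subseteq> W" and f0: "\<And>x. x \<notin> W \<Longrightarrow> f x = 0"
  shows "Qf c S f (hlim c W K) = 2 * (\<Sum>x\<in>K. f x * mu c W K x)"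
proof -
  let ?h = "hlim c W K"
  have fW: "finite W" using fS WS finite_subset by blast
  have "Qf c S f ?h = 2 * (\<Sum>x\<in>S. f x * (\<Sum>y\<in>S. c x y * (?h x - ?h y)))"
    by (rule Qf_green) (rule c_sym)
  also have "(\<Sum>x\<in>S. f x * (\<Sum>y\<in>S. c x y * (?h x - ?h y))) = (\<Sum>x\<in>W. f x * (\<Sum>y\<in>S. c x y * (?h x - ?h y)))"
    by (rule sum.mono_neutral_right[OF fS WS]) (auto simp: f0)
  also have "\<dots> = (\<Sum>x\<in>W. f x * (\<Sum>y\<in>nbrs c x. c x y * (?h x - ?h y)))"
  proof -
    have "(\<Sum>y\<in>S. c x y * (?h x - ?h y)) = (\<Sum>y\<in>nbrs c x. c x y * (?h x - ?h y))" if "x \<in> W" for x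
      by (rule sum.mono_neutral_right[OF fS NS[OF that]]) (auto simp: not_nbr)
    thus ?thesis by (intro sum.cong refl) auto
  qed
  also have "\<dots> = (\<Sum>x\<in>K. f x * (\<Sum>y\<in>nbrs c x. c x y * (?h x - ?h y)))"
    by (rule sum.mono_neutral_right[OF fW KW]) (auto simp: hlim_lap[OF WV])
  also have "\<dots> = (\<Sum>x\<in>K. f x * mu c W K x)"
    unfolding mu_def by (intro sum.cong refl) (simp add: hlim_K)
  finally show ?thesis .
qed

end


context net begin

lemma step:
  assumes BV: "B \<subseteq> V" and fB: "finite B" and eta: "\<eta> > 0"
  shows "\<exists>W0. finite W0 \<and> W0 \<subseteq> V \<and> B \<subseteq> W0 \<and>
    (\<forall>C. finite C \<longrightarrow> C \<subseteq> V \<longrightarrow> C \<inter> W0 = {} \<longrightarrow>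
       cap_fin c (B \<union> C) \<ge> cap_fin c B + cap_fin c C - 2 * sqrt (\<eta> * (cap_fin c C + \<eta>)) - \<eta>)"
proof -
  obtain W0 where W0: "finite W0" "W0 \<subseteq> V" "B \<subseteq> W0"
    "\<And>W. W0 \<subseteq> W \<Longrightarrow> W \<subseteq> V \<Longrightarrow> capW c W B \<le> cap_fin c B + \<eta>"
    using approx[OF BV fB eta] by blast
  have "cap_fin c (B \<union> C) \<ge> cap_fin c B + cap_fin c C - 2 * sqrt (\<eta> * (cap_fin c C + \<eta>)) - \<eta>"
    if fC: "finite C" and CV: "C \<subseteq> V" and CW0: "C \<inter> W0 = {}" for C
  proof -
    define L where "L = B \<union> C"
    have LV: "L \<subseteq> V" and fL: "finite L" using BV CV fB fC unfolding L_def by auto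
    obtain W1 where W1: "finite W1" "W1 \<subseteq> V" "L \<subseteq> W1"
      "\<And>W. W1 \<subseteq> W \<Longrightarrow> W \<subseteq> V \<Longrightarrow> capW c W L \<le> cap_fin c L + \<eta>"
      using approx[OF LV fL eta] by blast
    obtain W2 where W2: "finite W2" "W2 \<subseteq> V" "C \<subseteq> W2"
      "\<And>W. W2 \<subseteq> W \<Longrightarrow> W \<subseteq> V \<Longrightarrow> capW c W C \<le> cap_fin c C + \<eta>"
      using approx[OF CV fC eta] by blast
    define W' where "W' = W0 \<union> W1 \<union> W2"
    have W'V: "W' \<subseteq> V" and fW': "finite W'" using W0 W1 W2 unfolding W'_def by auto
    have BW': "B \<subseteq> W'" and CW': "C \<subseteq> W'" and LW': "L \<subseteq> W'" and W0W': "W0 \<subseteq> W'"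
      using W0 W1 W2 unfolding W'_def L_def by auto
    define S where "S = W' \<union> (\<Union>x\<in>W'. nbrs c x)"
    have fS: "finite S" unfolding S_def using fW' by (auto simp: nbrs_finite)
    have W'S: "W' \<subseteq> S" and NS: "\<And>x. x \<in> W' \<Longrightarrow> nbrs c x \<subseteq> S" unfolding S_def by auto
    have W0S: "W0 \<subseteq> S" and NS0: "\<And>x. x \<in> W0 \<Longrightarrow> nbrs c x \<subseteq> S" using W0W' W'S NS by auto
    define hB where "hB = hlim c W' B"
    define hC where "hC = hlim c W' C"
    define hL where "hL = hlim c W' L"
    define h0 where "h0 = hlim c W0 B"
    define a where "a = capW c W' B"
    define b where "b = capW c W' C"
    define l where "l = capW c W' L"
    define e where "e = capW c W0 B"
    define X where "X = (\<Sum>x\<in>C. hB x * mu c W' C x)"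
    have supB: "\<And>x. x \<notin> W' \<Longrightarrow> hB x = 0" unfolding hB_def using BW' by (auto intro: hlim_out)
    have supC: "\<And>x. x \<notin> W' \<Longrightarrow> hC x = 0" unfolding hC_def using CW' by (auto intro: hlim_out)
    have supL: "\<And>x. x \<notin> W' \<Longrightarrow> hL x = 0" unfolding hL_def using LW' by (auto intro: hlim_out)
    have sup0: "\<And>x. x \<notin> W0 \<Longrightarrow> h0 x = 0" unfolding h0_def using W0 by (auto intro: hlim_out)
    have sup0': "\<And>x. x \<notin> W' \<Longrightarrow> h0 x = 0" using sup0 W0W' by auto
    have G: "\<And>K f. K \<subseteq> W' \<Longrightarrow> (\<And>x. x \<notin> W' \<Longrightarrow> f x = 0) \<Longrightarrow> Qf c S f (hlim c W' K) = 2 * (\<Sum>x\<in>K. f x * mu c W' K x)"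
      by (rule green_h[OF W'V fS W'S]) (use NS in auto)
    have qLL: "Qf c S hL hL = 2 * l"
      unfolding l_def capW_mu using G[OF LW', of hL] supL by (simp add: hL_def hlim_K)
    have qBB: "Qf c S hB hB = 2 * a"
      unfolding a_def capW_mu using G[OF BW', of hB] supB by (simp add: hB_def hlim_K)
    have qCC: "Qf c S hC hC = 2 * b"
      unfolding b_def capW_mu using G[OF CW', of hC] supC by (simp add: hC_def hlim_K)
    have qLB: "Qf c S hL hB = 2 * a"
      unfolding a_def capW_mu using G[OF BW', of hL] supL by (simp add: hB_def hL_def hlim_K L_def)
    have qLC: "Qf c S hL hC = 2 * b"
      unfolding b_def capW_mu using G[OF CW', of hL] supL by (simp add: hC_def hL_def hlim_K L_def)
    have qBC: "Qf c S hB hC = 2 * X"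
      unfolding X_def using G[OF CW', of hB] supB by (simp add: hC_def)
    have q0C: "Qf c S h0 hC = 0"
    proof -
      have "Qf c S h0 hC = 2 * (\<Sum>x\<in>C. h0 x * mu c W' C x)"
        using G[OF CW', of h0] sup0' by (simp add: hC_def)
      also have "(\<Sum>x\<in>C. h0 x * mu c W' C x) = 0"
        using CW0 sup0 by (intro sum.neutral) auto
      finally show ?thesis by simp
    qed
    have q0B: "Qf c S h0 hB = 2 * a"
      unfolding a_def capW_mu using G[OF BW', of h0] sup0' W0 by (simp add: hB_def h0_def hlim_K)
    have q00: "Qf c S h0 h0 = 2 * e"
      unfolding e_def capW_mu using green_h[OF W0(2) fS W0S NS0 W0(3), of h0] sup0 by (simp add: h0_def hlim_K)
    define D where "D = (\<lambda>x. hB x - h0 x)"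
    have qDB: "Qf c S D hB = 0" unfolding D_def Qf_diff_left using qBB q0B by simp
    have qD0: "Qf c S D h0 = 2 * a - 2 * e" unfolding D_def Qf_diff_left using q0B q00 Qf_sym[of c S hB h0] by simp
    have qDD: "Qf c S D D = 2 * (e - a)"
      using Qf_sym[of c S D hB] Qf_sym[of c S D h0] qDB qD0 unfolding D_def Qf_diff_left by (simp add: D_def)
    have qDC: "Qf c S D hC = 2 * X" unfolding D_def Qf_diff_left using qBC q0C by simp
    have capB_le: "cap_fin c B \<le> a" unfolding a_def cap_fin_eq[OF BV] by (rule capW_mono[OF W'V order_refl])
    have capC_le: "cap_fin c C \<le> b" unfolding b_def cap_fin_eq[OF CV] by (rule capW_mono[OF W'V order_refl])
    have b_le: "b \<le> cap_fin c C + \<eta>" unfolding b_def by (rule W2(4)) (use W'V in \<open>auto simp: W'_def\<close>)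
    have l_le: "l \<le> cap_fin c L + \<eta>" unfolding l_def by (rule W1(4)) (use W'V in \<open>auto simp: W'_def\<close>)
    have e_le: "e \<le> cap_fin c B + \<eta>" unfolding e_def using W0 by auto
    have X0: "X \<ge> 0" unfolding X_def hB_def
      by (intro sum_nonneg mult_nonneg_nonneg mu_nonneg[OF W'V]) (use hlim_bounds[OF W'V] in auto)
    have CS1: "(Qf c S D hC)^2 \<le> Qf c S D D * Qf c S hC hC" by (rule Qf_CS) (rule c_nonneg)
    hence "(2*X)^2 \<le> 2 * (e - a) * (2 * b)" using qDC qDD qCC by simp
    hence "X^2 \<le> (e - a) * b" by (simp add: power2_eq_square algebra_simps)
    also have "\<dots> \<le> \<eta> * (cap_fin c C + \<eta>)"
    proof (rule mult_mono)
      show "e - a \<le> \<eta>" using e_le capB_le by simp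
      show "b \<le> cap_fin c C + \<eta>" by (rule b_le)
      show "0 \<le> \<eta>" using eta by simp
      show "0 \<le> b" using capC_le cap_fin_nonneg[of C] by simp
    qed
    finally have "sqrt (X^2) \<le> sqrt (\<eta> * (cap_fin c C + \<eta>))" by (rule real_sqrt_le_mono)
    hence Xle: "X \<le> sqrt (\<eta> * (cap_fin c C + \<eta>))" using X0 by simp
    define g where "g = (\<lambda>x. hB x + hC x)"
    have qLg: "Qf c S hL g = 2 * a + 2 * b"
      using Qf_sym[of c S hL g] Qf_sym[of c S hL hB] Qf_sym[of c S hL hC] qLB qLC
      unfolding g_def Qf_add_left by simp
    have qgg: "Qf c S g g = 2 * a + 2 * b + 4 * X"
    proof -
      have "Qf c S g g = Qf c S hB g + Qf c S hC g" unfolding g_def Qf_add_left ..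
      also have "Qf c S hB g = Qf c S hB hB + Qf c S hC hB"
        using Qf_sym[of c S hB g] unfolding g_def Qf_add_left by simp
      also have "Qf c S hC g = Qf c S hB hC + Qf c S hC hC"
        using Qf_sym[of c S hC g] Qf_sym[of c S hB hC] unfolding g_def Qf_add_left by simp
      finally show ?thesis using qBB qCC qBC Qf_sym[of c S hC hB] by simp
    qed
    have CS2: "(Qf c S hL g)^2 \<le> Qf c S hL hL * Qf c S g g" by (rule Qf_CS) (rule c_nonneg)
    hence "(2*a+2*b)^2 \<le> 2 * l * (2*a+2*b+4*X)" using qLg qgg qLL by simp
    hence I: "(a+b)^2 \<le> l * (a+b+2*X)" by (simp add: power2_eq_square algebra_simps)
    have l0: "l \<ge> 0" using qLL Qf_nonneg[of c S hL] c_nonneg by simp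
    have a0: "a \<ge> 0" using capB_le cap_fin_nonneg[of B] by simp
    have b0: "b \<ge> 0" using capC_le cap_fin_nonneg[of C] by simp
    have lge: "l \<ge> a + b - 2 * X"
    proof (rule ccontr)
      assume "\<not> ?thesis"
      hence lt: "l < a + b - 2 * X" by simp
      have "l * (a+b+2*X) \<le> (a+b-2*X) * (a+b+2*X)"
        using lt X0 a0 b0 by (intro mult_right_mono) auto
      also have "\<dots> = (a+b)^2 - 4 * X^2" by (simp add: power2_eq_square algebra_simps)
      finally have cc: "l * (a+b+2*X) \<le> (a+b)^2 - 4 * X^2" .
      have "X^2 \<le> 0" using cc I by linarith
      hence "X = 0" by simp
      hence "(a+b)^2 \<le> l * (a+b)" using I by simp
      moreover have "l * (a+b) < (a+b) * (a+b)" using lt \<open>X = 0\<close> l0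
        by (intro mult_strict_right_mono) auto
      ultimately show False by (simp add: power2_eq_square)
    qed
    show ?thesis using lge l_le capB_le capC_le Xle unfolding L_def by linarith
  qed
  thus ?thesis using W0 by blast
qed

end


lemma arith_final:
  fixes b \<epsilon> :: real
  assumes "\<epsilon> > 0" "b \<ge> \<epsilon> / 2"
  shows "b - 2 * sqrt (\<epsilon>/64 * (b + \<epsilon>/64)) - \<epsilon>/64 \<ge> \<epsilon> / 8"
proof -
  have b0: "b \<ge> 0" using assms by simp
  have h1: "\<epsilon> * b \<le> 2 * (b * b)" using assms b0 by (intro mult_right_mono[of _ "2*b" b, simplified mult.assoc]) auto
  have h2: "\<epsilon> * \<epsilon> \<le> (2*b) * (2*b)" using assms by (intro mult_mono) auto
  hence h2: "\<epsilon> * \<epsilon> \<le> 4 * (b * b)" by (simp add: algebra_simps)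
  have e1: "\<epsilon>/64 * (b + \<epsilon>/64) = (\<epsilon> * b)/64 + (\<epsilon> * \<epsilon>)/4096" by (simp add: algebra_simps)
  have e2: "(b/4)^2 = (b*b)/16" by (simp add: power2_eq_square)
  have "\<epsilon>/64 * (b + \<epsilon>/64) \<le> (b/4)^2" unfolding e1 e2 using h1 h2 mult_nonneg_nonneg[OF b0 b0] by linarith
  hence "sqrt (\<epsilon>/64 * (b + \<epsilon>/64)) \<le> sqrt ((b/4)^2)" by (rule real_sqrt_le_mono)
  hence "sqrt (\<epsilon>/64 * (b + \<epsilon>/64)) \<le> b/4" using b0 by simp
  thus ?thesis using assms by linarith
qed

theorem lemma2p13:
  fixes V :: "'v set" and c :: "'v \<Rightarrow> 'v \<Rightarrow> real" and A :: "'v set"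
    and As :: "nat \<Rightarrow> 'v set" and \<epsilon> :: real
  assumes "network V c" and "transient V c"
    and "A \<subseteq> V"
    and "\<epsilon> > 0"
    and "disjoint_family_on As {1..}"
    and "\<And>i. i \<ge> 1 \<Longrightarrow> As i \<subseteq> A"
    and "\<And>i. i \<ge> 1 \<Longrightarrow> Cap c (As i) \<ge> ereal \<epsilon>"
  shows "Cap c A = \<infinity>"
proof -
  interpret net V c using assms(1,2) by unfold_locales
  note AV = assms(3) and ep = assms(4) and dj = assms(5) and sub = assms(6) and capA = assms(7)
  have exF: "\<exists>F. finite F \<and> F \<subseteq> As i \<and> cap_fin c F \<ge> \<epsilon>/2" if i: "i \<ge> 1" for i
  proof (cases "finite (As i)")
    case True
    thus ?thesis using capA[OF i] ep unfolding Cap_def by (intro exI[of _ "As i"]) auto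
  next
    case False
    have "ereal (\<epsilon>/2) < ereal \<epsilon>" using ep by simp
    also have "\<dots> \<le> (SUP A'\<in>{A'. A' \<subseteq> As i \<and> finite A'}. ereal (cap_fin c A'))"
      using capA[OF i] False unfolding Cap_def by simp
    finally obtain F where "F \<in> {A'. A' \<subseteq> As i \<and> finite A'}" "ereal (\<epsilon>/2) < ereal (cap_fin c F)"
      unfolding less_SUP_iff by blast
    thus ?thesis by (intro exI[of _ F]) auto
  qed
  obtain Fs where Fs: "\<And>i. i \<ge> 1 \<Longrightarrow> finite (Fs i) \<and> Fs i \<subseteq> As i \<and> cap_fin c (Fs i) \<ge> \<epsilon>/2"
    using exF by metis
  have FsV: "Fs i \<subseteq> V" if "i \<ge> 1" for i using Fs[OF that] sub[OF that] AV by blast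
  have uniq: "i = j" if "i \<ge> 1" "j \<ge> 1" "w \<in> Fs i" "w \<in> Fs j" for i j w
  proof (rule ccontr)
    assume "i \<noteq> j"
    hence "As i \<inter> As j = {}" using dj that(1,2) unfolding disjoint_family_on_def by auto
    thus False using Fs that by blast
  qed
  have fin1: "finite {i. i \<ge> 1 \<and> w \<in> Fs i}" for w
  proof (cases "{i. i \<ge> 1 \<and> w \<in> Fs i} = {}")
    case False
    then obtain i0 where "i0 \<ge> 1" "w \<in> Fs i0" by auto
    hence "{i. i \<ge> 1 \<and> w \<in> Fs i} \<subseteq> {i0}" using uniq by blast
    thus ?thesis using finite_subset by blast
  qed (metis finite.emptyI)
  let ?\<eta> = "\<epsilon> / 64"
  have grow: "\<exists>F. finite F \<and> F \<subseteq> A \<and> cap_fin c F \<ge> real k * (\<epsilon> / 8)" for k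
  proof (induction k)
    case 0 thus ?case by (intro exI[of _ "{}"]) (simp add: cap_fin_def)
  next
    case (Suc k)
    then obtain F where F: "finite F" "F \<subseteq> A" "cap_fin c F \<ge> real k * (\<epsilon> / 8)" by blast
    have FV: "F \<subseteq> V" using F AV by blast
    obtain W0 where W0: "finite W0" "W0 \<subseteq> V" "F \<subseteq> W0"
      "\<And>C. finite C \<Longrightarrow> C \<subseteq> V \<Longrightarrow> C \<inter> W0 = {} \<Longrightarrow>
         cap_fin c (F \<union> C) \<ge> cap_fin c F + cap_fin c C - 2 * sqrt (?\<eta> * (cap_fin c C + ?\<eta>)) - ?\<eta>"
      using step[OF FV F(1), of ?\<eta>] ep by auto
    define I where "I = {i. i \<ge> 1 \<and> Fs i \<inter> W0 \<noteq> {}}"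
    have "I = (\<Union>w\<in>W0. {i. i \<ge> 1 \<and> w \<in> Fs i})" unfolding I_def by auto
    hence fI: "finite I" using W0(1) fin1 by auto
    define i where "i = Suc (Max (insert 0 I))"
    have i1: "i \<ge> 1" unfolding i_def by simp
    have "i \<notin> I"
    proof
      assume "i \<in> I"
      hence "i \<le> Max (insert 0 I)" using fI by simp
      thus False unfolding i_def by simp
    qed
    hence dis: "Fs i \<inter> W0 = {}" unfolding I_def using i1 by auto
    have "cap_fin c (F \<union> Fs i) \<ge> cap_fin c F + cap_fin c (Fs i) - 2 * sqrt (?\<eta> * (cap_fin c (Fs i) + ?\<eta>)) - ?\<eta>"
      using W0(4)[OF _ FsV[OF i1] dis] Fs[OF i1] by blast
    moreover have "cap_fin c (Fs i) - 2 * sqrt (?\<eta> * (cap_fin c (Fs i) + ?\<eta>)) - ?\<eta> \<ge> \<epsilon> / 8"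
      by (rule arith_final[OF ep]) (use Fs[OF i1] in auto)
    ultimately have "cap_fin c (F \<union> Fs i) \<ge> real (Suc k) * (\<epsilon> / 8)"
      using F(3) by (simp add: algebra_simps)
    moreover have "finite (F \<union> Fs i)" "F \<union> Fs i \<subseteq> A" using F Fs[OF i1] sub[OF i1] by auto
    ultimately show ?case by blast
  qed
  have big: "\<exists>F. finite F \<and> F \<subseteq> A \<and> cap_fin c F \<ge> r" for r :: real
  proof -
    obtain k :: nat where "r < real k * (\<epsilon> / 8)" using reals_Archimedean3[of "\<epsilon>/8"] ep by auto
    thus ?thesis using grow[of k] by force
  qed
  have infA: "infinite A"
  proof
    assume fA: "finite A"
    obtain F where F: "finite F" "F \<subseteq> A" "cap_fin c F \<ge> (\<Sum>v\<in>A. cond c v) + 1" using big by blast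
    have "cap_fin c F \<le> (\<Sum>v\<in>F. cond c v)"
      unfolding cap_fin_def by (intro sum_mono) (use esc_le1 cond_nonneg in \<open>auto intro: mult_left_le\<close>)
    also have "\<dots> \<le> (\<Sum>v\<in>A. cond c v)" by (rule sum_mono2[OF fA F(2)]) (simp add: cond_nonneg)
    finally show False using F by simp
  qed
  show ?thesis unfolding Cap_def using infA
  proof (simp, intro ereal_top)
    fix r :: real
    obtain F where F: "finite F" "F \<subseteq> A" "cap_fin c F \<ge> r" using big by blast
    have "ereal r \<le> ereal (cap_fin c F)" using F by simp
    also have "\<dots> \<le> (SUP A'\<in>{A'. A' \<subseteq> A \<and> finite A'}. ereal (cap_fin c A'))"
      by (rule SUP_upper) (use F in auto)
    finally show "ereal r \<le> (SUP A'\<in>{A'. A' \<subseteq> A \<and> finite A'}. ereal (cap_fin c A'))" .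
  qed
qed


end
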